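(* Let $\alpha_1,\dots,\alpha_n\in\mathcal R^n$ and consider the smooth representation $\bigoplus_{i=1}^n\chi^{\alpha_i}$ of $(\mathbb C^* )^n$ on $\mathbb C^n$. (1) It is faithful if and only if the $n\times n$ matrix with entries in $\mathcal R$ whose $(i,k)$-entry is $\alpha_i^k$ has an inverse with entries in $\mathcal R$. (2) If it is faithful, then the representation space has only finitely many orbits and has an open dense orbit; the open dense orbit is unique and isomorphic to $(\mathbb C^* )^n$, and every other orbit has real codimension at least two.
   Context: $\mathcal R$ is the ring of real $2\times2$ matrices $\begin{bmatrix} b&0\\ c&v\end{bmatrix}$ with $b,c\in\mathbb R$, $v\in\mathbb Z$, identified with $\mathbb C\times\mathbb Z$ via $(b+\sqrt{-1}c,v)$. For $g\in\mathbb C^*$ and $\mu=(b+\sqrt{-1}c,v)$, $g^\mu:=|g|^{b+\sqrt{-1}c}(g/|g|)^v$. For $\alpha=(\alpha^1,\dots,\alpha^n)\in\mathcal R^n$, $\chi^\alpha(g_1,\dots,g_n)=\prod_k g_k^{\alpha^k}$. The representation $\bigoplus_i\chi^{\alpha_i}$ acts on $\mathbb C^n$ by $g\cdot(z_1,\dots,z_n)=(\chi^{\alpha_1}(g)z_1,\dots,\chi^{\alpha_n}(g)z_n)$. Matrices over $\mathcal R$ are multiplied as usual (equivalently as real $2n\times 2n$ matrices). *)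

theory Defs
  imports "HOL-Analysis.Analysis"
begin

text \<open>Elements of the ring R are represented as pairs (b + i c, v) :: complex * int,
  standing for the real matrix [[b,0],[c,v]].\<close>

type_synonym Relt = "complex \<times> int"

text \<open>Multiplication in R, i.e. the matrix product
  [[b,0],[c,v]] [[b',0],[c',v']] = [[b b', 0],[c b' + v c', v v']].\<close>
definition rmul :: "Relt \<Rightarrow> Relt \<Rightarrow> Relt" where
  "rmul x y = (Complex (Re (fst x) * Re (fst y))
                       (Im (fst x) * Re (fst y) + of_int (snd x) * Im (fst y)),
               snd x * snd y)"

definition rmatmul :: "('n::finite \<Rightarrow> 'n \<Rightarrow> Relt) \<Rightarrow> ('n \<Rightarrow> 'n \<Rightarrow> Relt) \<Rightarrow> ('n \<Rightarrow> 'n \<Rightarrow> Relt)" where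
  "rmatmul A B = (\<lambda>i k. ((\<Sum>j\<in>UNIV. fst (rmul (A i j) (B j k))),
                          (\<Sum>j\<in>UNIV. snd (rmul (A i j) (B j k)))))"

definition rmat_id :: "'n::finite \<Rightarrow> 'n \<Rightarrow> Relt" where
  "rmat_id = (\<lambda>i k. if i = k then (1, 1) else (0, 0))"

definition rmat_invertible :: "('n::finite \<Rightarrow> 'n \<Rightarrow> Relt) \<Rightarrow> bool" where
  "rmat_invertible A \<longleftrightarrow> (\<exists>B. rmatmul A B = rmat_id \<and> rmatmul B A = rmat_id)"

definition rpow :: "complex \<Rightarrow> Relt \<Rightarrow> complex" where
  "rpow g mu = exp (fst mu * of_real (ln (cmod g))) * (g / of_real (cmod g)) powi (snd mu)"

definition torus :: "(complex ^ 'n) set" where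
  "torus = {g. \<forall>k. g $ k \<noteq> 0}"

definition chi :: "('n::finite \<Rightarrow> Relt) \<Rightarrow> complex ^ 'n \<Rightarrow> complex" where
  "chi a g = (\<Prod>k\<in>UNIV. rpow (g $ k) (a k))"

text \<open>The representation (direct sum of the chi^{alpha_i}); \<open>al i k\<close> is alpha_i^k.\<close>
definition act :: "('n::finite \<Rightarrow> 'n \<Rightarrow> Relt) \<Rightarrow> complex ^ 'n \<Rightarrow> complex ^ 'n \<Rightarrow> complex ^ 'n" where
  "act al g z = (\<chi> i. chi (al i) g * z $ i)"

definition faithful :: "('n::finite \<Rightarrow> 'n \<Rightarrow> Relt) \<Rightarrow> bool" where
  "faithful al \<longleftrightarrow> (\<forall>g\<in>torus. (\<forall>z. act al g z = z) \<longrightarrow> g = 1)"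

definition orbit :: "('n::finite \<Rightarrow> 'n \<Rightarrow> Relt) \<Rightarrow> complex ^ 'n \<Rightarrow> (complex ^ 'n) set" where
  "orbit al z = (\<lambda>g. act al g z) ` torus"

definition orbits :: "('n::finite \<Rightarrow> 'n \<Rightarrow> Relt) \<Rightarrow> (complex ^ 'n) set set" where
  "orbits al = range (orbit al)"

end

theory Submission imports Defs begin

lemma rpow_nz: "rpow g mu \<noteq> 0" if "g \<noteq> 0"
  using that by (simp add: rpow_def)

lemma rpow_one_base: "rpow 1 mu = 1"
  by (simp add: rpow_def)

lemma rpow_id: "g \<noteq> 0 \<Longrightarrow> rpow g (1,1) = g"
proof -
  assume g: "g \<noteq> 0"
  have "exp (complex_of_real (ln (cmod g))) = complex_of_real (cmod g)"
    using g by (simp add: exp_of_real)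
  then show ?thesis using g by (simp add: rpow_def)
qed

lemma rpow_zero: "rpow g (0,0) = 1"
  by (simp add: rpow_def)

lemma rpow_add: "g \<noteq> 0 \<Longrightarrow> rpow g (a + b, m + n) = rpow g (a, m) * rpow g (b, n)"
  by (simp add: rpow_def exp_add power_int_add distrib_right)

lemma rpow_mult: "g \<noteq> 0 \<Longrightarrow> h \<noteq> 0 \<Longrightarrow> rpow (g*h) mu = rpow g mu * rpow h mu"
proof -
  assume g: "g \<noteq> 0" and h: "h \<noteq> 0"
  have "g*h / of_real (cmod (g*h)) = (g / of_real (cmod g)) * (h / of_real (cmod h))"
    by (simp add: norm_mult)
  then have e: "(g*h / of_real (cmod (g*h))) powi n = (g / of_real (cmod g)) powi n * (h / of_real (cmod h)) powi n" for n
    by (simp only: power_int_mult_distrib)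
  have "exp (fst mu * of_real (ln (cmod (g*h)))) = exp (fst mu * of_real (ln (cmod g))) * exp (fst mu * of_real (ln (cmod h)))"
    using g h by (simp add: norm_mult ln_mult distrib_left exp_add)
  then show ?thesis unfolding rpow_def e by simp

qed

lemma rpow_rpow: assumes g: "g \<noteq> 0" shows "rpow (rpow g mu) nu = rpow g (rmul nu mu)"
proof -
  obtain b c v where mu: "mu = (Complex b c, v)" by (metis complex.exhaust prod.exhaust)
  obtain b' c' v' where nu: "nu = (Complex b' c', v')" by (metis complex.exhaust prod.exhaust)
  define L where "L = ln (cmod g)"
  define u where "u = g / of_real (cmod g)"
  have u0: "u \<noteq> 0" using g by (simp add: u_def)
  have cu: "cmod u = 1" using g by (simp add: u_def norm_divide)
  have r: "rpow g mu = exp (Complex b c * of_real L) * u powi v"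
    by (simp add: rpow_def mu L_def u_def)
  have e1: "exp (Complex b c * of_real L) = of_real (exp (b*L)) * exp (\<i> * of_real (c*L))"
  proof -
    have eq: "Complex b c * of_real L = of_real (b*L) + \<i> * of_real (c*L)"
      by (simp add: complex_eq_iff)
    show ?thesis by (subst eq) (simp only: exp_add exp_of_real)
  qed
  have cm: "cmod (rpow g mu) = exp (b*L)"
    by (simp add: r e1 norm_mult norm_power_int cu)
  have un: "rpow g mu / of_real (exp (b*L)) = exp (\<i> * of_real (c*L)) * u powi v"
    by (simp add: r e1)
  have "rpow (rpow g mu) nu = exp (Complex b' c' * of_real (b*L)) * (exp (\<i> * of_real (c*L)) * u powi v) powi v'"
    unfolding nu rpow_def[of "rpow g mu" "(Complex b' c', v')"] un cm fst_conv snd_conv ln_exp by (rule refl)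
  also have "\<dots> = exp (Complex b' c' * of_real (b*L)) * exp (of_int v' * (\<i> * of_real (c*L))) * u powi (v * v')"
    by (simp add: power_int_mult_distrib exp_power_int power_int_mult)
  also have "\<dots> = exp (Complex b' c' * of_real (b*L) + of_int v' * (\<i> * of_real (c*L))) * u powi (v' * v)"
    by (simp add: exp_add mult.commute)
  also have "Complex b' c' * of_real (b*L) + of_int v' * (\<i> * of_real (c*L)) = Complex (b'*b) (c'*b + of_int v' * c) * of_real L"
    by (simp add: complex_eq_iff algebra_simps)
  finally show ?thesis
    by (simp add: rpow_def rmul_def mu nu L_def u_def)
qed

lemma rpow_sum: "finite S \<Longrightarrow> g \<noteq> 0 \<Longrightarrow>
   (\<Prod>j\<in>S. rpow g (f j)) = rpow g ((\<Sum>j\<in>S. fst (f j)), (\<Sum>j\<in>S. snd (f j)))"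
proof (induction S rule: finite_induct)
  case empty then show ?case by (simp add: rpow_zero)
next
  case (insert x F)
  have "rpow g (fst (f x), snd (f x)) = rpow g (f x)" by simp
  with insert show ?case by (simp add: rpow_add)
qed

lemma rpow_prod_base: "finite S \<Longrightarrow> (\<forall>j\<in>S. g j \<noteq> 0) \<Longrightarrow>
   rpow (\<Prod>j\<in>S. g j) mu = (\<Prod>j\<in>S. rpow (g j) mu)"
proof (induction S rule: finite_induct)
  case empty then show ?case by (simp add: rpow_one_base)
next
  case (insert x F)
  then show ?case by (simp add: rpow_mult)
qed

definition Phi :: "('n::finite \<Rightarrow> 'n \<Rightarrow> Relt) \<Rightarrow> complex ^ 'n \<Rightarrow> complex ^ 'n" where
  "Phi A g = (\<chi> i. chi (A i) g)"

lemma chi_nz: "g \<in> torus \<Longrightarrow> chi a g \<noteq> 0"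
  by (simp add: chi_def torus_def rpow_nz)

lemma Phi_torus: "g \<in> torus \<Longrightarrow> Phi A g \<in> torus"
  by (simp add: Phi_def torus_def chi_nz)

lemma chi_one: "chi a 1 = 1"
  by (simp add: chi_def rpow_one_base)

lemma Phi_one: "Phi A 1 = 1"
  by (simp add: Phi_def chi_one vec_eq_iff)

lemma Phi_id: "g \<in> torus \<Longrightarrow> Phi rmat_id g = g"
proof -
  assume g: "g \<in> torus"
  have "chi (rmat_id i) g = g $ i" for i
  proof -
    have "chi (rmat_id i) g = (\<Prod>k\<in>UNIV. if k = i then g $ i else 1)"
      unfolding chi_def rmat_id_def
      by (rule prod.cong) (use g in \<open>auto simp: torus_def rpow_id rpow_zero\<close>)
    also have "\<dots> = g $ i" by (simp add: prod.delta)
    finally show ?thesis .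
  qed
  then show ?thesis by (simp add: Phi_def vec_eq_iff)
qed

lemma Phi_comp: assumes g: "g \<in> torus" shows "Phi A (Phi B g) = Phi (rmatmul A B) g"
proof -
  have gk: "g $ k \<noteq> 0" for k using g by (simp add: torus_def)
  have "chi (A i) (Phi B g) = chi (rmatmul A B i) g" for i
  proof -
    have "chi (A i) (Phi B g) = (\<Prod>j\<in>UNIV. rpow (\<Prod>k\<in>UNIV. rpow (g $ k) (B j k)) (A i j))"
      by (simp add: chi_def Phi_def)
    also have "\<dots> = (\<Prod>j\<in>UNIV. \<Prod>k\<in>UNIV. rpow (g $ k) (rmul (A i j) (B j k)))"
      by (simp add: rpow_prod_base rpow_nz gk rpow_rpow)
    also have "\<dots> = (\<Prod>k\<in>UNIV. \<Prod>j\<in>UNIV. rpow (g $ k) (rmul (A i j) (B j k)))"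
      by (rule prod.swap)
    also have "\<dots> = chi (rmatmul A B i) g"
      by (simp add: chi_def rmatmul_def rpow_sum gk)
    finally show ?thesis .
  qed
  then show ?thesis by (simp add: Phi_def vec_eq_iff)
qed

lemma act_Phi: "act al g z $ i = Phi al g $ i * z $ i"
  by (simp add: act_def Phi_def)

lemma faithful_iff: "faithful al \<longleftrightarrow> (\<forall>g\<in>torus. Phi al g = 1 \<longrightarrow> g = 1)"
proof -
  have "(\<forall>z. act al g z = z) \<longleftrightarrow> Phi al g = 1" for g
  proof
    assume "\<forall>z. act al g z = z"
    then have "act al g 1 = 1" by blast
    then show "Phi al g = 1" by (simp add: vec_eq_iff act_Phi)
  next
    assume "Phi al g = 1"
    then show "\<forall>z. act al g z = z" by (simp add: vec_eq_iff act_Phi)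
  qed
  then show ?thesis by (simp add: faithful_def)
qed

lemma inv_faithful: assumes "rmat_invertible al" shows "faithful al"
proof -
  obtain B where B: "rmatmul al B = rmat_id" "rmatmul B al = rmat_id"
    using assms by (auto simp: rmat_invertible_def)
  show ?thesis unfolding faithful_iff
  proof (intro ballI impI)
    fix g :: "complex^'a" assume g: "g \<in> torus" and p: "Phi al g = 1"
    have "g = Phi B (Phi al g)" using g B by (simp add: Phi_comp Phi_id)
    then show "g = 1" using p by (simp add: Phi_one)
  qed
qed

definition Bm :: "('n::finite \<Rightarrow> 'n \<Rightarrow> Relt) \<Rightarrow> real^'n^'n" where
  "Bm al = (\<chi> i k. Re (fst (al i k)))"
definition Cm :: "('n::finite \<Rightarrow> 'n \<Rightarrow> Relt) \<Rightarrow> real^'n^'n" where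
  "Cm al = (\<chi> i k. Im (fst (al i k)))"
definition Vm :: "('n::finite \<Rightarrow> 'n \<Rightarrow> Relt) \<Rightarrow> real^'n^'n" where
  "Vm al = (\<chi> i k. of_int (snd (al i k)))"
definition E :: "real^'n \<Rightarrow> real^'n \<Rightarrow> complex^'n" where
  "E x t = (\<chi> k. exp (Complex (x$k) (t$k)))"

lemma E_torus: "E x t \<in> torus"
  by (simp add: E_def torus_def)

lemma rpow_exp: "rpow (exp (Complex a t)) mu = exp (Complex (Re (fst mu) * a) (Im (fst mu) * a + of_int (snd mu) * t))"
proof -
  have c: "cmod (exp (Complex a t)) = exp a" by simp
  have e: "exp (Complex a t) = of_real (exp a) * exp (\<i> * of_real t)"
  proof -
    have "Complex a t = of_real a + \<i> * of_real t" by (simp add: complex_eq_iff)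
    then show ?thesis by (simp only: exp_add exp_of_real)
  qed
  have d: "exp (Complex a t) / of_real (exp a) = exp (\<i> * of_real t)"
    by (simp add: e)
  have "rpow (exp (Complex a t)) mu = exp (fst mu * of_real a) * exp (of_int (snd mu) * (\<i> * of_real t))"
    unfolding rpow_def c d by (simp add: exp_power_int)
  also have "\<dots> = exp (Complex (Re (fst mu) * a) (Im (fst mu) * a + of_int (snd mu) * t))"
    by (simp only: exp_add[symmetric]) (rule arg_cong[where f=exp], simp add: complex_eq_iff)
  finally show ?thesis .
qed

lemma chi_E: "chi (al i) (E x t) = exp (Complex ((Bm al *v x)$i) ((Cm al *v x + Vm al *v t)$i))"
proof -
  have "chi (al i) (E x t) = (\<Prod>k\<in>UNIV. exp (Complex (Re (fst (al i k)) * x$k) (Im (fst (al i k)) * x$k + of_int (snd (al i k)) * t$k)))"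
    by (simp add: chi_def E_def rpow_exp)
  also have "\<dots> = exp (\<Sum>k\<in>UNIV. Complex (Re (fst (al i k)) * x$k) (Im (fst (al i k)) * x$k + of_int (snd (al i k)) * t$k))"
    by (simp add: exp_sum)
  also have "\<dots> = exp (Complex ((Bm al *v x)$i) ((Cm al *v x + Vm al *v t)$i))"
    by (rule arg_cong[where f=exp]) (simp add: complex_eq_iff Bm_def Cm_def Vm_def matrix_vector_mult_def sum.distrib)
  finally show ?thesis .
qed

lemma faithful_lin: assumes "faithful al"
  and "Bm al *v x = 0" and "\<forall>i. \<exists>n::int. (Cm al *v x + Vm al *v t)$i = of_int (2*n) * pi"
  shows "x = 0 \<and> (\<forall>k. \<exists>n::int. t$k = of_int (2*n) * pi)"
proof -
  have "Phi al (E x t) = 1"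
    using assms(2,3) by (simp add: vec_eq_iff Phi_def chi_E exp_eq_1)
  then have "E x t = 1" using assms(1) E_torus[of x t] unfolding faithful_iff by blast
  then have "\<forall>k. exp (Complex (x$k) (t$k)) = 1" by (simp add: vec_eq_iff E_def)
  then show ?thesis by (simp add: exp_eq_1 vec_eq_iff)
qed

lemma mat_mul_neg: "(A::real^'n^'m) ** (- X :: real^'k^'n) = - (A ** X)"
  by (simp add: vec_eq_iff matrix_matrix_mult_def sum_negf)

lemma mv_neg: "(A::real^'n^'m) *v (- x) = - (A *v x)"
  by (simp add: vec_eq_iff matrix_vector_mult_def sum_negf)

lemma mat_mul_neg_l: "(- A::real^'n^'m) ** (X :: real^'k^'n) = - (A ** X)"
  by (simp add: vec_eq_iff matrix_matrix_mult_def sum_negf)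

lemma faithful_inv: assumes F: "faithful al" shows "rmat_invertible al"
proof -
  let ?B = "Bm al" and ?C = "Cm al" and ?V = "Vm al"
  have Vinj: "\<forall>t. ?V *v t = 0 \<longrightarrow> t = 0"
  proof (intro allI impI)
    fix t assume t: "?V *v t = 0"
    show "t = 0"
    proof (rule ccontr)
      assume "t \<noteq> 0"
      then obtain k where k: "t$k \<noteq> 0" by (auto simp: vec_eq_iff)
      define s where "s = (pi / t$k) *\<^sub>R t"
      have "?V *v s = 0" by (simp add: s_def matrix_vector_mult_scaleR t)
      then have "\<forall>i. \<exists>n::int. (?C *v 0 + ?V *v s)$i = of_int (2*n) * pi" by (auto intro: exI[of _ 0])
      from faithful_lin[OF F _ this] obtain n :: int where "s$k = of_int (2*n) * pi" by auto
      then have "pi * 1 = pi * (2 * of_int n)" using k by (simp add: s_def)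
      then have "(1::real) = 2 * of_int n" by simp
      then have "(1::int) = 2 * n" by linarith
      then show False by presburger
    qed
  qed
  obtain W where W1: "W ** ?V = mat 1" using Vinj matrix_left_invertible_ker by blast
  then have W2: "?V ** W = mat 1" using matrix_left_right_inverse by blast
  have Binj: "\<forall>x. ?B *v x = 0 \<longrightarrow> x = 0"
  proof (intro allI impI)
    fix x assume x: "?B *v x = 0"
    define t where "t = - (W *v (?C *v x))"
    have "?V *v (W *v (?C *v x)) = ?C *v x"
      by (simp only: matrix_vector_mul_assoc matrix_mul_assoc W2 matrix_mul_lid)
    then have "?V *v t = - (?C *v x)"
      by (simp add: t_def mv_neg)
    then have "\<forall>i. \<exists>n::int. (?C *v x + ?V *v t)$i = of_int (2*n) * pi" by (auto intro: exI[of _ 0])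
    from faithful_lin[OF F x this] show "x = 0" by simp
  qed
  obtain Bi where B1: "Bi ** ?B = mat 1" using Binj matrix_left_invertible_ker by blast
  then have B2: "?B ** Bi = mat 1" using matrix_left_right_inverse by blast
  have Wint: "\<exists>n::int. W$k$j = of_int n" for k j
  proof -
    define t where "t = (2*pi) *\<^sub>R (W *v axis j 1)"
    have Vt: "?V *v t = (2*pi) *\<^sub>R axis j 1"
      by (simp add: t_def matrix_vector_mult_scaleR matrix_vector_mul_assoc W2)
    have "\<forall>i. \<exists>n::int. (?C *v 0 + ?V *v t)$i = of_int (2*n) * pi"
    proof
      fix i show "\<exists>n::int. (?C *v 0 + ?V *v t)$i = of_int (2*n) * pi"
        by (rule exI[of _ "if i = j then 1 else 0"]) (simp add: Vt axis_def)
    qed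
    from faithful_lin[OF F _ this] obtain n :: int where "t$k = of_int (2*n) * pi" by auto
    moreover have "t$k = 2 * pi * W$k$j"
      by (simp add: t_def matrix_vector_mult_def axis_def mult_delta_right)
    ultimately have "W$k$j = of_int n" by simp
    then show ?thesis by blast
  qed
  then obtain Wi :: "'a \<Rightarrow> 'a \<Rightarrow> int" where Wi: "\<And>k j. W$k$j = of_int (Wi k j)" by metis
  define D where "D = - (W ** (?C ** Bi))"
  define B where "B = (\<lambda>i k. (Complex (Bi$i$k) (D$i$k), Wi i k))"
  have e1: "?C ** Bi + ?V ** D = 0"
    by (simp add: D_def mat_mul_neg matrix_mul_assoc W2)
  have e2: "D ** ?B + W ** ?C = 0"
    by (simp add: D_def mat_mul_neg_l matrix_mul_assoc[symmetric] B1)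
  have ab: "rmatmul al B = rmat_id"
  proof (intro ext)
    fix i k
    have r1: "(\<Sum>j\<in>UNIV. Re (fst (al i j)) * Bi$j$k) = (if i = k then 1 else 0)"
      using B2 by (simp add: vec_eq_iff matrix_matrix_mult_def Bm_def mat_def)
    have r2: "(\<Sum>j\<in>UNIV. Im (fst (al i j)) * Bi$j$k + of_int (snd (al i j)) * D$j$k) = 0"
      using e1 by (simp add: vec_eq_iff matrix_matrix_mult_def Cm_def Vm_def sum.distrib)
    have "real_of_int (\<Sum>j\<in>UNIV. snd (al i j) * Wi j k) = real_of_int (if i = k then 1 else 0)"
      using W2 by (simp add: vec_eq_iff matrix_matrix_mult_def Vm_def mat_def Wi)
    then have r3: "(\<Sum>j\<in>UNIV. snd (al i j) * Wi j k) = (if i = k then 1 else 0)"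
      using of_int_eq_iff by blast
    show "rmatmul al B i k = rmat_id i k"
      using r1 r2 r3 by (cases "i = k") (simp_all add: rmatmul_def rmat_id_def rmul_def B_def complex_eq_iff)
  qed
  have ba: "rmatmul B al = rmat_id"
  proof (intro ext)
    fix i k
    have r1: "(\<Sum>j\<in>UNIV. Bi$i$j * Re (fst (al j k))) = (if i = k then 1 else 0)"
      using B1 by (simp add: vec_eq_iff matrix_matrix_mult_def Bm_def mat_def)
    have r2: "(\<Sum>j\<in>UNIV. D$i$j * Re (fst (al j k)) + of_int (Wi i j) * Im (fst (al j k))) = 0"
      using e2 by (simp add: vec_eq_iff matrix_matrix_mult_def Cm_def Bm_def sum.distrib Wi)
    have "real_of_int (\<Sum>j\<in>UNIV. Wi i j * snd (al j k)) = real_of_int (if i = k then 1 else 0)"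
      using W1 by (simp add: vec_eq_iff matrix_matrix_mult_def Vm_def mat_def Wi)
    then have r3: "(\<Sum>j\<in>UNIV. Wi i j * snd (al j k)) = (if i = k then 1 else 0)"
      using of_int_eq_iff by blast
    show "rmatmul B al i k = rmat_id i k"
      using r1 r2 r3 by (cases "i = k") (simp_all add: rmatmul_def rmat_id_def rmul_def B_def complex_eq_iff)
  qed
  show ?thesis using ab ba by (auto simp: rmat_invertible_def)
qed

lemma cont_chi: "continuous_on torus (chi a)"
  unfolding chi_def rpow_def torus_def
  by (auto intro!: continuous_intros)

lemma cont_Phi: "continuous_on torus (Phi A)"
  unfolding Phi_def by (auto intro!: continuous_intros continuous_on_compose2[OF cont_chi])

lemma open_torus: "open (torus :: (complex^'n::finite) set)"
proof -
  have "torus = (\<Inter>k\<in>UNIV. {g::complex^'n. g$k \<noteq> 0})" by (auto simp: torus_def)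
  moreover have "open {g::complex^'n. g$k \<noteq> 0}" for k
    by (rule open_Collect_neq) (auto intro!: continuous_intros)
  then have "open (\<Inter>k\<in>UNIV. {g::complex^'n. g$k \<noteq> 0})" by (intro open_INT) auto
  ultimately show ?thesis by simp
qed

lemma closure_torus: "closure (torus :: (complex^'n::finite) set) = UNIV"
proof -
  have "w \<in> closure torus" for w :: "complex^'n"
  proof (unfold closure_approachable, intro allI impI)
    fix e :: real assume e: "e > 0"
    define d where "d = e / (2 * real CARD('n))"
    have d: "d > 0" using e by (simp add: d_def)
    define y where "y = (\<chi> k. if w$k = 0 then of_real d else w$k)"
    have "y \<in> torus" using d by (simp add: y_def torus_def)
    moreover have "dist y w < e"
    proof -
      have "dist y w = norm (y - w)" by (simp add: dist_norm)
      also have "\<dots> \<le> (\<Sum>k\<in>UNIV. norm ((y - w)$k))" unfolding norm_vec_def by (rule L2_set_le_sum) simp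
      also have "\<dots> \<le> (\<Sum>k\<in>(UNIV::'n set). d)"
        by (rule sum_mono) (use d in \<open>simp add: y_def\<close>)
      also have "\<dots> = e / 2" using e by (simp add: d_def)
      also have "\<dots> < e" using e by simp
      finally show ?thesis .
    qed
    ultimately show "\<exists>y\<in>torus. dist y w < e" by blast
  qed
  then show ?thesis by auto
qed

lemma orbit_eq: fixes z :: "complex^'n::finite" assumes ab: "rmatmul al B = rmat_id"
  shows "orbit al z = {w. \<forall>i. (w$i = 0) = (z$i = 0)}"
proof
  show "orbit al z \<subseteq> {w. \<forall>i. (w$i = 0) = (z$i = 0)}"
    by (auto simp: orbit_def act_Phi Phi_def chi_nz)
next
  show "{w. \<forall>i. (w$i = 0) = (z$i = 0)} \<subseteq> orbit al z"
  proof
    fix w :: "complex^'n" assume w: "w \<in> {w. \<forall>i. (w$i = 0) = (z$i = 0)}"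
    define q where "q = (\<chi> i. if z$i = 0 then 1 else w$i / z$i)"
    have q: "q \<in> torus" using w by (auto simp: q_def torus_def)
    have "Phi al (Phi B q) = q" using q ab by (simp add: Phi_comp Phi_id)
    then have "act al (Phi B q) z = w" using w
      by (auto simp: vec_eq_iff act_Phi q_def)
    then show "w \<in> orbit al z" using Phi_torus[OF q] by (force simp: orbit_def)
  qed
qed

lemma norm_axis_le: "norm (axis i (c::complex) :: complex^'n::finite) \<le> norm c"
proof -
  have "norm (axis i c :: complex^'n) \<le> (\<Sum>j\<in>UNIV. norm ((axis i c :: complex^'n)$j))"
    unfolding norm_vec_def by (rule L2_set_le_sum) simp
  also have "\<dots> = norm c" by (simp add: axis_def if_distrib cong: if_cong)
  finally show ?thesis .
qed

lemma aff_dim_coord: "aff_dim {w::complex^'n::finite. w$i = 0} \<le> 2 * int CARD('n) - 2"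
proof -
  let ?H = "{w::complex^'n. w$i = 0}"
  let ?a = "axis i (1::complex) :: complex^'n"
  let ?H1 = "{w::complex^'n. ?a \<bullet> w = 0}"
  have a: "?a \<noteq> 0" by (simp add: vec_eq_iff axis_def)
  have inn: "?a \<bullet> w = Re (w$i)" for w :: "complex^'n"
  proof -
    have "(?a $ j) \<bullet> (w$j) = (if j = i then Re (w$i) else 0)" for j
      by (simp add: axis_def inner_complex_def)
    then show ?thesis by (simp add: inner_vec_def)
  qed
  have sH: "subspace ?H" unfolding subspace_def by simp
  have sH1: "subspace ?H1" unfolding subspace_def mem_Collect_eq inn by simp
  have "?H \<subset> ?H1"
  proof
    show "?H \<subseteq> ?H1" by (auto simp: inn)
    have "axis i \<i> \<in> ?H1" unfolding mem_Collect_eq inn by simp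
    moreover have "axis i \<i> \<notin> ?H" by (simp add: axis_def)
    ultimately show "?H \<noteq> ?H1" by blast
  qed
  moreover have "affine hull ?H = ?H" by (rule affine_hull_eq[THEN iffD2, OF subspace_imp_affine[OF sH]])
  moreover have "affine hull ?H1 = ?H1" by (rule affine_hull_eq[THEN iffD2, OF subspace_imp_affine[OF sH1]])
  ultimately have "affine hull ?H \<subset> affine hull ?H1" by (simp only:)
  then have "aff_dim ?H < aff_dim ?H1" by (rule aff_dim_psubset)
  also have "aff_dim ?H1 = int (DIM(complex^'n) - 1)" by (rule aff_dim_hyperplane[OF a])
  finally have lt: "aff_dim ?H < int (DIM(complex^'n) - 1)" .
  have "DIM(complex^'n) = 2 * CARD('n)" by simp
  moreover have "CARD('n) > 0" by simp
  ultimately have "int (DIM(complex^'n) - 1) = 2 * int CARD('n) - 1" by simp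
  with lt show ?thesis by linarith
qed

theorem lemma2p5:
  fixes al :: "'n::finite \<Rightarrow> 'n \<Rightarrow> complex \<times> int"
  shows "(faithful al \<longleftrightarrow> rmat_invertible al) \<and>
         (faithful al \<longrightarrow>
            finite (orbits al) \<and>
            (\<exists>U\<in>orbits al. open U \<and> closure U = UNIV \<and>
               (\<forall>V\<in>orbits al. open V \<and> closure V = UNIV \<longrightarrow> V = U) \<and>
               (\<forall>z\<in>U. \<exists>h. homeomorphism torus U (\<lambda>g. act al g z) h) \<and>
               (\<forall>V\<in>orbits al. V \<noteq> U \<longrightarrow> aff_dim V \<le> 2 * int CARD('n) - 2)))"
proof (intro conjI impI)
  show eq: "faithful al \<longleftrightarrow> rmat_invertible al" using inv_faithful faithful_inv by blast
  assume F: "faithful al"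
  then obtain B where ab: "rmatmul al B = rmat_id" and ba: "rmatmul B al = rmat_id"
    using eq by (auto simp: rmat_invertible_def)
  define Orb where "Orb = (\<lambda>S. {w::complex^'n. \<forall>i. (w$i = 0) = (i \<in> S)})"
  have orb: "orbit al z = Orb {i. z$i = 0}" for z
    using orbit_eq[OF ab, of z] by (simp add: Orb_def)
  have orbT: "orbit al 1 = torus" using orbit_eq[OF ab, of 1] by (auto simp: torus_def)
  have orbT2: "(\<forall>i. z$i \<noteq> 0) \<Longrightarrow> orbit al z = torus" for z
    using orbit_eq[OF ab, of z] by (auto simp: torus_def)
  have zin: "z \<in> orbit al z" for z using orbit_eq[OF ab, of z] by auto
  have "orbits al \<subseteq> Orb ` UNIV" by (auto simp: orbits_def orb)
  then show "finite (orbits al)" by (rule finite_subset) simp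
  show "\<exists>U\<in>orbits al. open U \<and> closure U = UNIV \<and>
               (\<forall>V\<in>orbits al. open V \<and> closure V = UNIV \<longrightarrow> V = U) \<and>
               (\<forall>z\<in>U. \<exists>h. homeomorphism torus U (\<lambda>g. act al g z) h) \<and>
               (\<forall>V\<in>orbits al. V \<noteq> U \<longrightarrow> aff_dim V \<le> 2 * int CARD('n) - 2)"
  proof (intro bexI[of _ torus] conjI ballI impI)
    show "torus \<in> orbits al" using orbT by (metis orbits_def rangeI)
    show "open (torus :: (complex^'n) set)" by (rule open_torus)
    show "closure (torus :: (complex^'n) set) = UNIV" by (rule closure_torus)
  next
    fix V assume V: "V \<in> orbits al" and oV: "open V \<and> closure V = UNIV"
    obtain z where Vz: "V = orbit al z" using V by (auto simp: orbits_def)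
    show "V = torus"
    proof (cases "\<forall>i. z$i \<noteq> 0")
      case True then show ?thesis using Vz orbT2 by simp
    next
      case False
      then obtain i where i: "z$i = 0" by auto
      obtain e where e: "e > 0" "ball z e \<subseteq> V" using oV zin Vz open_contains_ball by blast
      define y where "y = z + axis i (of_real (e/2) :: complex)"
      have "norm (axis i (of_real (e/2)::complex) :: complex^'n) \<le> norm (of_real (e/2)::complex)"
        by (rule norm_axis_le)
      then have "dist z y \<le> e/2" using e
        by (simp add: y_def dist_norm)
      then have "y \<in> V" using e by auto
      moreover have "y$i \<noteq> 0" using i e by (simp add: y_def axis_def)
      ultimately show ?thesis using orbit_eq[OF ab, of z] Vz i by auto
    qed
  next
    fix z :: "complex^'n" assume z: "z \<in> torus"
    have zk: "z$k \<noteq> 0" for k using z by (simp add: torus_def)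
    define h where "h = (\<lambda>w::complex^'n. Phi B (\<chi> i. w$i / z$i))"
    have actP: "act al g z = (\<chi> i. Phi al g $ i * z$i)" for g
      by (simp add: vec_eq_iff act_Phi)
    have dq: "(\<chi> i. w$i / z$i) \<in> torus" if "w \<in> torus" for w
      using that zk by (simp add: torus_def)
    show "\<exists>h. homeomorphism torus torus (\<lambda>g. act al g z) h"
    proof (intro exI[of _ h] homeomorphismI)
      show "continuous_on torus (\<lambda>g. act al g z)"
        unfolding actP by (intro continuous_on_vec_lambda continuous_on_mult[OF continuous_on_component[OF cont_Phi] continuous_on_const])
      have c1: "continuous_on torus (\<lambda>w::complex^'n. \<chi> i. w$i / z$i)"
        by (intro continuous_on_vec_lambda continuous_on_divide continuous_on_const) (auto intro: continuous_on_component simp: zk)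
      show "continuous_on torus h"
        unfolding h_def by (rule continuous_on_compose2[OF cont_Phi c1]) (use dq in auto)
      show "(\<lambda>g. act al g z) ` torus \<subseteq> torus"
        using zk by (auto simp: torus_def act_Phi Phi_def chi_nz)
      show "h ` torus \<subseteq> torus" unfolding h_def using dq Phi_torus by auto
      show "h (act al g z) = g" if "g \<in> torus" for g
      proof -
        have "(\<chi> i. act al g z $ i / z$i) = Phi al g" using zk by (simp add: vec_eq_iff act_Phi)
        then show ?thesis using that ba by (simp add: h_def Phi_comp Phi_id)
      qed
      show "act al (h w) z = w" if "w \<in> torus" for w
      proof -
        have "Phi al (h w) = (\<chi> i. w$i / z$i)" using dq[OF that] ab by (simp add: h_def Phi_comp Phi_id)
        then show ?thesis using zk by (simp add: vec_eq_iff act_Phi)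
      qed
    qed
  next
    fix V assume V: "V \<in> orbits al" and ne: "V \<noteq> torus"
    obtain z where Vz: "V = orbit al z" using V by (auto simp: orbits_def)
    obtain i where i: "z$i = 0" using orbT2 Vz ne by blast
    have "V \<subseteq> {w. w$i = 0}" using orbit_eq[OF ab, of z] Vz i by auto
    then have "aff_dim V \<le> aff_dim {w::complex^'n. w$i = 0}" by (rule aff_dim_subset)
    moreover have "aff_dim {w::complex^'n. w$i = 0} \<le> 2 * int CARD('n) - 2" by (rule aff_dim_coord)
    ultimately show "aff_dim V \<le> 2 * int CARD('n) - 2" by linarith
  qed
qed
end
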